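(* Let $U=(u_{ij}),V=(v_{ij})\in\mathcal{U}_d(\mathbb{C})$, and let $R_U=(r_{ij})$, $R_V=(s_{ij})$ be real matrices with non-negative entries such that $r_{ij}=0$ iff $u_{ij}=0$ (and $r_{ij}>0$ otherwise), and $s_{ij}=0$ iff $v_{ij}=0$ (and $s_{ij}>0$ otherwise). Then there exists $D\in\mathcal{DU}_d(\mathbb{C})$ such that for all $k,l\in\{1,\dots,d\}$, $$(R_UR_V)_{kl}\neq 0\iff (UDV)_{kl}\neq 0.$$
   Context: $\mathcal{U}_d(\mathbb{C})$ denotes the group of $d\times d$ unitary matrices and $\mathcal{DU}_d(\mathbb{C})$ its subgroup of diagonal unitary matrices. *)

theory Defs
  imports "HOL-Analysis.Analysis"
begin

definition conj_transpose :: "complex^'n^'m \<Rightarrow> complex^'m^'n" where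
  "conj_transpose A = (\<chi> i j. cnj (A $ j $ i))"

definition unitary_mat :: "complex^'n^'n \<Rightarrow> bool" where
  "unitary_mat U \<longleftrightarrow> U ** conj_transpose U = mat 1 \<and> conj_transpose U ** U = mat 1"

definition diagonal_mat :: "('a::zero)^'n^'n \<Rightarrow> bool" where
  "diagonal_mat D \<longleftrightarrow> (\<forall>i j. i \<noteq> j \<longrightarrow> D $ i $ j = 0)"

definition diag_unitary_mat :: "complex^'n^'n \<Rightarrow> bool" where
  "diag_unitary_mat D \<longleftrightarrow> unitary_mat D \<and> diagonal_mat D"

end

theory Submission
  imports Defs "HOL-Computational_Algebra.Polynomial"
begin

lemma sphere_infinite: "infinite (sphere (0::complex) 1)"
proof
  assume f: "finite (sphere (0::complex) 1)"
  have "connected (sphere (0::complex) 1)"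
    by (rule connected_sphere) auto
  with f have "sphere (0::complex) 1 = {} \<or> (\<exists>a. sphere (0::complex) 1 = {a})"
    using connected_finite_iff_sing by blast
  moreover have "1 \<in> sphere (0::complex) 1" "-1 \<in> sphere (0::complex) 1" by auto
  ultimately show False
    by (metis empty_iff singletonD complex_i_not_one neg_equal_iff_equal one_neq_neg_one)
qed

lemma poly_sum_monom:
  fixes c :: "'n::finite \<Rightarrow> complex" and m :: "'n \<Rightarrow> nat"
  shows "poly (\<Sum>j\<in>UNIV. monom (c j) (m j)) z = (\<Sum>j\<in>UNIV. c j * z ^ m j)"
  by (simp add: poly_sum poly_monom)

lemma coeff_sum_monom_inj:
  fixes c :: "'n::finite \<Rightarrow> complex" and m :: "'n \<Rightarrow> nat"
  assumes "inj m"
  shows "coeff (\<Sum>j\<in>UNIV. monom (c j) (m j)) (m i) = c i"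
proof -
  have "coeff (\<Sum>j\<in>UNIV. monom (c j) (m j)) (m i) = (\<Sum>j\<in>UNIV. if j = i then c j else 0)"
    unfolding coeff_sum coeff_monom
    by (rule sum.cong) (use assms in \<open>auto dest: injD\<close>)
  also have "\<dots> = c i" by simp
  finally show ?thesis .
qed

theorem lemma22:
  fixes U V :: "complex^'n^'n" and RU RV :: "real^'n^'n"
  assumes "unitary_mat U" and "unitary_mat V"
    and "\<forall>i j. RU $ i $ j \<ge> 0 \<and> (RU $ i $ j = 0 \<longleftrightarrow> U $ i $ j = 0)"
    and "\<forall>i j. RV $ i $ j \<ge> 0 \<and> (RV $ i $ j = 0 \<longleftrightarrow> V $ i $ j = 0)"
  shows "\<exists>D. diag_unitary_mat D \<and>
           (\<forall>k l. (RU ** RV) $ k $ l \<noteq> 0 \<longleftrightarrow> (U ** D ** V) $ k $ l \<noteq> 0)"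
proof -
  obtain m :: "'n \<Rightarrow> nat" where m: "inj m"
    using finite_imp_inj_to_nat_seg[of "UNIV :: 'n set"] by auto
  define P where "P k l = (\<Sum>j\<in>UNIV. monom (U $ k $ j * V $ j $ l) (m j))" for k l
  define G where "G = {(k, l). \<exists>j. U $ k $ j \<noteq> 0 \<and> V $ j $ l \<noteq> 0}"
  define Z where "Z = (\<Union>(k,l)\<in>G. {x. poly (P k l) x = 0})"
  have PG: "P k l \<noteq> 0" if "(k,l) \<in> G" for k l
  proof
    assume "P k l = 0"
    from that obtain j where j: "U $ k $ j \<noteq> 0" "V $ j $ l \<noteq> 0" unfolding G_def by auto
    have "coeff (P k l) (m j) = U $ k $ j * V $ j $ l"
      unfolding P_def by (rule coeff_sum_monom_inj[OF m])
    with \<open>P k l = 0\<close> j show False by simp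
  qed
  have "finite Z" unfolding Z_def
    by (rule finite_UN_I) (use PG poly_roots_finite in auto)
  then obtain z where z: "z \<in> sphere 0 1" "z \<notin> Z"
    using sphere_infinite by (meson ex_in_conv finite_subset subsetI infinite_remove
        Diff_iff infinite_imp_nonempty)
  have nz: "norm z = 1" using z by simp
  define D :: "complex^'n^'n" where "D = (\<chi> i j. if i = j then z ^ m i else 0)"
  have zc: "z * cnj z = 1"
    using nz by (metis complex_norm_square mult.commute norm_one one_power2 of_real_1)
  have zp: "z ^ n * cnj (z ^ n) = 1" for n
    by (metis complex_cnj_power power_mult_distrib power_one zc)
  have zp2: "cnj (z ^ n) * z ^ n = 1" for n
    using zp[of n] by (simp add: mult.commute)
  have zp': "z ^ n * cnj z ^ n = 1" for n using zp[of n] by simp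
  have zp2': "cnj z ^ n * z ^ n = 1" for n using zp2[of n] by simp
  have "unitary_mat D"
    unfolding unitary_mat_def conj_transpose_def D_def
    by (auto simp: matrix_matrix_mult_def mat_def vec_eq_iff zp' zp2'
        if_distrib[where f="\<lambda>x. x * _"] if_distrib[where f="\<lambda>x. _ * x"] cong: if_cong)
  moreover have "diagonal_mat D" unfolding diagonal_mat_def D_def by simp
  moreover have "(RU ** RV) $ k $ l \<noteq> 0 \<longleftrightarrow> (U ** D ** V) $ k $ l \<noteq> 0" for k l
  proof -
    have L: "(RU ** RV) $ k $ l \<noteq> 0 \<longleftrightarrow> (k,l) \<in> G"
    proof -
      have "(RU ** RV) $ k $ l = (\<Sum>j\<in>UNIV. RU $ k $ j * RV $ j $ l)"
        by (simp add: matrix_matrix_mult_def)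
      moreover have "(\<Sum>j\<in>UNIV. RU $ k $ j * RV $ j $ l) = 0 \<longleftrightarrow>
          (\<forall>j. RU $ k $ j * RV $ j $ l = 0)"
        by (subst sum_nonneg_eq_0_iff) (use assms(3,4) in auto)
      ultimately show ?thesis unfolding G_def using assms(3,4) by auto
    qed
    have UD: "(U ** D) $ k $ j = U $ k $ j * z ^ m j" for j
      unfolding matrix_matrix_mult_def D_def
      by (simp add: if_distrib[where f="\<lambda>x. _ * x"] cong: if_cong)
    have R: "(U ** D ** V) $ k $ l = poly (P k l) z"
    proof -
      have "(U ** D ** V) $ k $ l = (\<Sum>j\<in>UNIV. (U ** D) $ k $ j * V $ j $ l)"
        by (simp add: matrix_matrix_mult_def)
      also have "\<dots> = (\<Sum>j\<in>UNIV. U $ k $ j * V $ j $ l * z ^ m j)"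
        by (simp add: UD mult_ac)
      finally show ?thesis unfolding P_def poly_sum_monom .
    qed
    show ?thesis
    proof (cases "(k,l) \<in> G")
      case True
      then have "poly (P k l) z \<noteq> 0" using z(2) unfolding Z_def by auto
      then show ?thesis using L R True by simp
    next
      case False
      then have "\<forall>j. U $ k $ j * V $ j $ l = 0" unfolding G_def by auto
      then have "P k l = 0" unfolding P_def by (intro sum.neutral) simp
      then show ?thesis using L R False by simp
    qed
  qed
  ultimately show ?thesis unfolding diag_unitary_mat_def by blast
qed

end
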